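(* The reduction relation $\to_{{\tt j}/{\tt obox}}$ on $\lambda j$-terms is terminating.
   Context: $\lambda j$-terms are generated by $t,u::= x\mid \lambda x.t\mid t\,u\mid t[x/u]$; $\lambda x.t$ and $t[x/u]$ bind $x$ in $t$ (not in $u$), and terms are considered modulo $\alpha$-conversion. $\mathrm{fv}(t)$ is the set of free variables, $t\{x/u\}$ is capture-avoiding meta-level substitution, and $|t|_x$ is the number of free occurrences of $x$ in $t$. If $|t|_x=n\ge2$, $t_{[y]_x}$ denotes any term obtained from $t$ by replacing $k$ of the free occurrences of $x$ by a fresh variable $y$, for some $1\le k\le n-1$. $\to_{\tt j}$ is the closure under all contexts of: $({\tt w})$ $t[x/u]\to t$ if $|t|_x=0$; $({\tt d})$ $t[x/u]\to t\{x/u\}$ if $|t|_x=1$; $({\tt c})$ $t[x/u]\to t_{[y]_x}[x/u][y/u]$ if $|t|_x\ge2$, $y$ fresh. The substitution equivalence $\equiv_{\tt obox}$ is the smallest equivalence closed under contexts containing: $t[x/s][y/v]\sim t[y/v][x/s]$ if $x\notin\mathrm{fv}(v)$ and $y\notin\mathrm{fv}(s)$; $\lambda y.(t[x/s])\sim(\lambda y.t)[x/s]$ if $y\notin\mathrm{fv}(s)$; $t[x/s]\,v\sim(t\,v)[x/s]$ if $x\notin\mathrm{fv}(v)$; $(t\,v)[x/u]\sim t\,(v[x/u])$ if $x\notin\mathrm{fv}(t)$ and $x\in\mathrm{fv}(v)$; $t[y/v][x/u]\sim t[y/v[x/u]]$ if $x\notin\mathrm{fv}(t)$ and $x\in\mathrm{fv}(v)$.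 $t\to_{{\tt j}/{\tt obox}}u$ iff $t\equiv_{\tt obox}t'\to_{\tt j}u'\equiv_{\tt obox}u$ for some $t',u'$. *)

theory Defs
  imports Main
begin

text \<open>lambda-j terms modulo alpha-conversion, represented with de Bruijn indices.
  Lam t binds index 0 in t; Sub t u stands for t[x/u] and binds index 0 (= x) in t, not in u.\<close>

datatype trm = Var nat | Lam trm | App trm trm | Sub trm trm

fun lift :: "nat \<Rightarrow> trm \<Rightarrow> trm" where
  "lift k (Var i) = (if i < k then Var i else Var (Suc i))"
| "lift k (Lam t) = Lam (lift (Suc k) t)"
| "lift k (App t u) = App (lift k t) (lift k u)"
| "lift k (Sub t u) = Sub (lift (Suc k) t) (lift k u)"

fun subst :: "trm \<Rightarrow> nat \<Rightarrow> trm \<Rightarrow> trm" where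
  "subst (Var i) k u = (if i < k then Var i else if i = k then u else Var (i - 1))"
| "subst (Lam t) k u = Lam (subst t (Suc k) (lift 0 u))"
| "subst (App t v) k u = App (subst t k u) (subst v k u)"
| "subst (Sub t v) k u = Sub (subst t (Suc k) (lift 0 u)) (subst v k u)"

fun occ :: "nat \<Rightarrow> trm \<Rightarrow> nat" where
  "occ k (Var i) = (if i = k then 1 else 0)"
| "occ k (Lam t) = occ (Suc k) t"
| "occ k (App t u) = occ k t + occ k u"
| "occ k (Sub t u) = occ (Suc k) t + occ k u"

fun swap :: "nat \<Rightarrow> trm \<Rightarrow> trm" where
  "swap k (Var i) = (if i = k then Var (Suc k) else if i = Suc k then Var k else Var i)"
| "swap k (Lam t) = Lam (swap (Suc k) t)"
| "swap k (App t u) = App (swap k t) (swap k u)"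
| "swap k (Sub t u) = Sub (swap (Suc k) t) (swap k u)"

text \<open>split d t s: s is obtained from t (viewed at binder depth d, where the variable x
  is index d) by inserting a fresh variable y as index d+1 and replacing some (possibly
  none/all) free occurrences of x by y.\<close>
inductive split :: "nat \<Rightarrow> trm \<Rightarrow> trm \<Rightarrow> bool" where
  split_x:    "split d (Var d) (Var d)"
| split_y:    "split d (Var d) (Var (Suc d))"
| split_lt:   "i < d \<Longrightarrow> split d (Var i) (Var i)"
| split_gt:   "d < i \<Longrightarrow> split d (Var i) (Var (Suc i))"
| split_lam:  "split (Suc d) t s \<Longrightarrow> split d (Lam t) (Lam s)"
| split_app:  "split d t s \<Longrightarrow> split d u v \<Longrightarrow> split d (App t u) (App s v)"
| split_sub:  "split (Suc d) t s \<Longrightarrow> split d u v \<Longrightarrow> split d (Sub t u) (Sub s v)"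

inductive jstep :: "trm \<Rightarrow> trm \<Rightarrow> bool" where
  j_w: "occ 0 t = 0 \<Longrightarrow> jstep (Sub t u) (subst t 0 u)"
| j_d: "occ 0 t = 1 \<Longrightarrow> jstep (Sub t u) (subst t 0 u)"
| j_c: "occ 0 t \<ge> 2 \<Longrightarrow> split 0 t s \<Longrightarrow> occ 0 s \<ge> 1 \<Longrightarrow> occ 1 s \<ge> 1 \<Longrightarrow>
        jstep (Sub t u) (Sub (Sub s (lift 0 u)) u)"
| j_lam:  "jstep t t' \<Longrightarrow> jstep (Lam t) (Lam t')"
| j_appL: "jstep t t' \<Longrightarrow> jstep (App t u) (App t' u)"
| j_appR: "jstep u u' \<Longrightarrow> jstep (App t u) (App t u')"
| j_subL: "jstep t t' \<Longrightarrow> jstep (Sub t u) (Sub t' u)"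
| j_subR: "jstep u u' \<Longrightarrow> jstep (Sub t u) (Sub t u')"

text \<open>The substitution equivalence ==_obox: smallest equivalence relation closed under
  contexts containing the five axioms (side conditions "x notin fv(-)" are expressed by
  requiring the term to be a lifted term).\<close>
inductive obox_eq :: "trm \<Rightarrow> trm \<Rightarrow> bool" where
  ax_comm: "obox_eq (Sub (Sub t (lift 0 s)) v) (Sub (Sub (swap 0 t) (lift 0 v)) s)"
| ax_lam:  "obox_eq (Lam (Sub t (lift 0 s))) (Sub (Lam (swap 0 t)) s)"
| ax_appL: "obox_eq (App (Sub t s) v) (Sub (App t (lift 0 v)) s)"
| ax_appR: "occ 0 v \<ge> 1 \<Longrightarrow> obox_eq (Sub (App (lift 0 t) v) u) (App t (Sub v u))"
| ax_box:  "occ 0 v \<ge> 1 \<Longrightarrow> obox_eq (Sub (Sub (lift 1 t) v) u) (Sub t (Sub v u))"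
| eq_refl:  "obox_eq t t"
| eq_sym:   "obox_eq t u \<Longrightarrow> obox_eq u t"
| eq_trans: "obox_eq t u \<Longrightarrow> obox_eq u v \<Longrightarrow> obox_eq t v"
| eq_lam:  "obox_eq t t' \<Longrightarrow> obox_eq (Lam t) (Lam t')"
| eq_app:  "obox_eq t t' \<Longrightarrow> obox_eq u u' \<Longrightarrow> obox_eq (App t u) (App t' u')"
| eq_sub:  "obox_eq t t' \<Longrightarrow> obox_eq u u' \<Longrightarrow> obox_eq (Sub t u) (Sub t' u')"

definition jobox :: "trm \<Rightarrow> trm \<Rightarrow> bool" where
  "jobox t u \<longleftrightarrow> (\<exists>t' u'. obox_eq t t' \<and> jstep t' u' \<and> obox_eq u' u)"

end

theory Submission
  imports Defs "HOL-Library.Multiset_Order"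
begin

fun ee :: "nat \<Rightarrow> trm \<Rightarrow> nat" where
  "ee k (Var i) = (if i = k then 1 else 0)"
| "ee k (Lam t) = ee (Suc k) t"
| "ee k (App t u) = ee k t + ee k u"
| "ee k (Sub t u) = ee (Suc k) t + max (ee 0 t) 1 * ee k u"

fun MS :: "trm \<Rightarrow> nat multiset" where
  "MS (Var i) = {#}"
| "MS (Lam t) = MS t"
| "MS (App t u) = MS t + MS u"
| "MS (Sub t u) = add_mset (ee 0 t) (MS t + image_mset ((*) (max (ee 0 t) 1)) (MS u))"

lemma ee_lift: "ee j (lift k t) = (if j < k then ee j t else if j = k then 0 else ee (j - 1) t)"
  by (induction t arbitrary: j k) auto

lemma ee_lift0[simp]: "ee 0 (lift (Suc k) t) = ee 0 t"
  by (simp add: ee_lift)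

lemma ee_lift_same[simp]: "ee k (lift k t) = 0"
  by (simp add: ee_lift)

lemma ee_lift_Suc[simp]: "ee (Suc j) (lift 0 t) = ee j t"
  by (simp add: ee_lift)

lemma ee_lift1_SS[simp]: "ee (Suc (Suc j)) (lift 1 t) = ee (Suc j) t"
  by (simp add: ee_lift)

lemma MS_lift[simp]: "MS (lift k t) = MS t"
  by (induction t arbitrary: k) auto

lemma ee_swap: "ee j (swap k t) = ee (if j = k then Suc k else if j = Suc k then k else j) t"
  by (induction t arbitrary: j k) auto

lemma ee_swap0[simp]: "ee 0 (swap (Suc k) t) = ee 0 t"
  by (simp add: ee_swap)

lemma MS_swap[simp]: "MS (swap k t) = MS t"
  by (induction t arbitrary: k) auto

lemma ee_occ: "ee k t = 0 \<longleftrightarrow> occ k t = 0"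
  by (induction t arbitrary: k) auto

lemma ee_subst: "ee j (subst t k u) = ee (if j < k then j else Suc j) t + ee k t * ee j u"
proof (induction t arbitrary: j k u)
  case (Var i)
  then show ?case by auto
next
  case (Lam t)
  then show ?case by simp
next
  case (App t1 t2)
  then show ?case by (simp add: algebra_simps)
next
  case (Sub t1 t2)
  have h: "ee 0 (subst t1 (Suc k) (lift 0 u)) = ee 0 t1"
    using Sub.IH(1)[of 0 "Suc k" "lift 0 u"] by simp
  show ?case using Sub.IH(1)[of "Suc j" "Suc k" "lift 0 u"] Sub.IH(2)[of j k u] h
    by (simp add: algebra_simps)
qed

lemma image_mult_comp: "image_mset ((*) (a::nat)) (image_mset ((*) b) M) = image_mset ((*) (a * b)) M"
  by (induction M) auto

lemma image_mult_one[simp]: "image_mset ((*) (Suc 0)) M = M"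
  by (induction M) auto

lemma MS_subst: "occ k t \<le> 1 \<Longrightarrow>
  MS (subst t k u) = MS t + (if occ k t = 0 then {#} else image_mset ((*) (ee k t)) (MS u))"
proof (induction t arbitrary: k u)
  case (Var i)
  then show ?case by auto
next
  case (Lam t)
  then show ?case by simp
next
  case (App t1 t2)
  then have o: "occ k t1 \<le> 1" "occ k t2 \<le> 1" by auto
  note i1 = App.IH(1)[OF o(1), of u] and i2 = App.IH(2)[OF o(2), of u]
  have e1: "occ k t1 = 0 \<Longrightarrow> ee k t1 = 0" and e2: "occ k t2 = 0 \<Longrightarrow> ee k t2 = 0"
    by (simp_all add: ee_occ)
  show ?case using App.prems i1 i2 e1 e2
    by (cases "occ k t1 = 0"; cases "occ k t2 = 0") (auto simp: ac_simps)
next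
  case (Sub t1 t2)
  have h: "ee 0 (subst t1 (Suc k) (lift 0 u)) = ee 0 t1"
    using ee_subst[of 0 t1 "Suc k" "lift 0 u"] by simp
  from Sub.prems have o: "occ (Suc k) t1 \<le> 1" "occ k t2 \<le> 1" by auto
  have e1: "occ (Suc k) t1 = 0 \<Longrightarrow> ee (Suc k) t1 = 0" and e2: "occ k t2 = 0 \<Longrightarrow> ee k t2 = 0"
    by (simp_all add: ee_occ)
  show ?case
    using Sub.IH(1)[OF o(1), of "lift 0 u"] Sub.IH(2)[OF o(2), of u] h Sub.prems e1 e2
    by (cases "occ (Suc k) t1 = 0"; cases "occ k t2 = 0") (auto simp: image_mult_comp algebra_simps)
qed

lemma split_props: "split d t s \<Longrightarrow>
  ee d t = ee d s + ee (Suc d) s \<and> (\<forall>j<d. ee j s = ee j t) \<and> (\<forall>j>d. ee (Suc j) s = ee j t) \<and> MS s = MS t"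
proof (induction rule: split.induct)
  case (split_lam d t s)
  then show ?case by (auto simp: All_less_Suc2 less_Suc_eq_0_disj)
next
  case (split_app d t s u v)
  then show ?case by auto
next
  case (split_sub d t s u v)
  have z: "ee 0 s = ee 0 t" using split_sub by auto
  have a: "\<forall>j<d. ee (Suc j) s = ee (Suc j) t" using split_sub by auto
  have b: "\<forall>j>d. ee (Suc (Suc j)) s = ee (Suc j) t" using split_sub by auto
  show ?case using split_sub z a b by (auto simp: algebra_simps)
qed auto

lemma M_pos: "(a::nat) \<ge> 1 \<Longrightarrow> max a 1 = a" by simp

lemma obox_inv: "obox_eq t u \<Longrightarrow> MS t = MS u \<and> (\<forall>k. ee k t = ee k u)"
proof (induction rule: obox_eq.induct)
  case (ax_comm t s v)
  then show ?case by (auto simp: ee_swap algebra_simps)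
next
  case (ax_lam t s)
  then show ?case by (auto simp: ee_swap algebra_simps)
next
  case (ax_appL t s v)
  then show ?case by (auto simp: algebra_simps)
next
  case (ax_appR v t u)
  then have a: "ee 0 v \<ge> 1" using ee_occ[of 0 v] by auto
  then show ?case by (auto simp: algebra_simps)
next
  case (ax_box v t u)
  then have a: "ee 0 v \<ge> 1" using ee_occ[of 0 v] by auto
  have m: "max (ee 0 t) 1 * ee 0 v \<ge> 1" using a by simp
  show ?case using a m by (auto simp: algebra_simps image_mult_comp ee_lift)
next
  case (eq_app t t' u u')
  then show ?case by auto
next
  case (eq_sub t t' u u')
  then show ?case by auto
qed auto

lemma img_le: "(m'::nat) \<le> m \<Longrightarrow> image_mset ((*) m') M \<le> image_mset ((*) m) M"
proof (induction M)
  case empty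
  then show ?case by simp
next
  case (add x M)
  have "{#m' * x#} \<le> {#m * x#}" using add.prems
    by (cases "m' * x = m * x") (auto simp: mult_le_mono1 le_less)
  then have "{#m' * x#} + image_mset ((*) m') M \<le> {#m * x#} + image_mset ((*) m) M"
    using add by (intro add_mono) auto
  then show ?case by simp
qed

lemma img_less: "(m::nat) \<ge> 1 \<Longrightarrow> A < B \<Longrightarrow> image_mset ((*) m) A < image_mset ((*) m) B"
  by (rule image_mset_strict_mono) auto

lemma add_mset_le_less: "(a'::nat) \<le> a \<Longrightarrow> A' < A \<Longrightarrow> B' \<le> B \<Longrightarrow>
  add_mset a' (A' + B') < add_mset a (A + B)"
proof -
  assume h: "a' \<le> a" "A' < A" "B' \<le> B"
  have "{#a'#} \<le> {#a#}" using h(1) by (auto simp: le_less)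
  moreover have "A' + B' < A + B" using h(2,3) by (rule add_less_le_mono)
  ultimately have "{#a'#} + (A' + B') < {#a#} + (A + B)" by (rule add_le_less_mono)
  then show ?thesis by simp
qed

lemma add_mset_le_le_less: "(a'::nat) \<le> a \<Longrightarrow> A' \<le> A \<Longrightarrow> B' < B \<Longrightarrow>
  add_mset a' (A' + B') < add_mset a (A + B)"
proof -
  assume h: "a' \<le> a" "A' \<le> A" "B' < B"
  have "{#a'#} \<le> {#a#}" using h(1) by (auto simp: le_less)
  moreover have "A' + B' < A + B" using h(2,3) by (rule add_le_less_mono)
  ultimately have "{#a'#} + (A' + B') < {#a#} + (A + B)" by (rule add_le_less_mono)
  then show ?thesis by simp
qed

lemma c_less: "(a::nat) \<ge> 1 \<Longrightarrow> b \<ge> 1 \<Longrightarrow>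
  add_mset b (add_mset a (K + image_mset ((*) a) U) + image_mset ((*) b) U)
   < add_mset (a + b) (K + image_mset ((*) (a + b)) U)"
proof -
  assume ab: "a \<ge> 1" "b \<ge> 1"
  let ?Y = "add_mset b (add_mset a (image_mset ((*) a) U + image_mset ((*) b) U))"
  let ?X = "add_mset (a + b) (image_mset ((*) (a + b)) U)"
  have "?Y < ?X"
    unfolding less_multiset\<^sub>D\<^sub>M
  proof (intro exI conjI)
    show "?X \<noteq> {#}" by simp
    show "?X \<subseteq># ?X" by simp
    show "?Y = ?X - ?X + ?Y" by simp
    show "\<forall>k. k \<in># ?Y \<longrightarrow> (\<exists>x. x \<in># ?X \<and> k < x)"
    proof (intro allI impI)
      fix k assume "k \<in># ?Y"
      then consider "k = a" | "k = b" | z where "z \<in># U" "k = a * z" | z where "z \<in># U" "k = b * z"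
        by auto
      then show "\<exists>x. x \<in># ?X \<and> k < x"
      proof cases
        case 1 then show ?thesis using ab by (intro exI[of _ "a+b"]) auto
      next
        case 2 then show ?thesis using ab by (intro exI[of _ "a+b"]) auto
      next
        case 3
        show ?thesis
        proof (cases "z = 0")
          case True then show ?thesis using 3 ab by (intro exI[of _ "a+b"]) auto
        next
          case False
          then have "a * z < (a+b) * z" using ab by simp
          moreover have "(a+b) * z \<in># ?X" using 3 by auto
          ultimately show ?thesis using 3 by blast
        qed
      next
        case 4
        show ?thesis
        proof (cases "z = 0")
          case True then show ?thesis using 4 ab by (intro exI[of _ "a+b"]) auto
        next
          case False
          then have "b * z < (a+b) * z" using ab by simp
          moreover have "(a+b) * z \<in># ?X" using 4 by auto
          ultimately show ?thesis using 4 by blast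
        qed
      qed
    qed
  qed
  then have "K + ?Y < K + ?X" by (rule union_le_mono2)
  then show ?thesis by (simp add: ac_simps)
qed

lemma jstep_dec: "jstep t u \<Longrightarrow> MS u < MS t \<and> (\<forall>k. ee k u \<le> ee k t)"
proof (induction rule: jstep.induct)
  case (j_w t u)
  have e0: "ee 0 t = 0" using j_w ee_occ by simp
  have "MS (subst t 0 u) = MS t" using j_w MS_subst[of 0 t u] by simp
  moreover have "MS t < MS (Sub t u)"
    by (rule subset_imp_less_mset) (simp add: subset_mset.less_le_not_le)
  moreover have "\<forall>k. ee k (subst t 0 u) \<le> ee k (Sub t u)"
    by (simp add: ee_subst e0)
  ultimately show ?case by simp
next
  case (j_d t u)
  have e0: "ee 0 t \<ge> 1" using j_d ee_occ[of 0 t] by simp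
  have "MS (subst t 0 u) = MS t + image_mset ((*) (ee 0 t)) (MS u)" using j_d MS_subst[of 0 t u] by simp
  moreover have "MS t + image_mset ((*) (ee 0 t)) (MS u) < MS (Sub t u)"
    using e0 by (simp add: le_multiset_right_total)
  moreover have "\<forall>k. ee k (subst t 0 u) \<le> ee k (Sub t u)"
    using e0 by (simp add: ee_subst)
  ultimately show ?case by simp
next
  case (j_c t s u)
  have sp: "ee 0 t = ee 0 s + ee 1 s" "\<forall>j>0. ee (Suc j) s = ee j t" "MS s = MS t"
    using split_props[OF j_c(2)] by auto
  have a: "ee 0 s \<ge> 1" using j_c(3) ee_occ[of 0 s] by simp
  have b: "ee 1 s \<ge> 1" using j_c(4) ee_occ[of 1 s] by simp
  have i: "ee 0 (Sub s (lift 0 u)) = ee 1 s" by simp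
  have "MS (Sub (Sub s (lift 0 u)) u) =
    add_mset (ee 1 s) (add_mset (ee 0 s) (MS t + image_mset ((*) (ee 0 s)) (MS u)) + image_mset ((*) (ee 1 s)) (MS u))"
    using a b sp(3) by (simp only: MS.simps i MS_lift M_pos)
  also have "\<dots> < add_mset (ee 0 s + ee 1 s) (MS t + image_mset ((*) (ee 0 s + ee 1 s)) (MS u))"
    by (rule c_less[OF a b])
  also have "\<dots> = MS (Sub t u)" using sp(1) a by simp
  finally have m: "MS (Sub (Sub s (lift 0 u)) u) < MS (Sub t u)" .
  have "\<forall>k. ee k (Sub (Sub s (lift 0 u)) u) = ee k (Sub t u)"
  proof
    fix k
    have "ee (Suc (Suc k)) s = ee (Suc k) t" using sp(2) by simp
    then show "ee k (Sub (Sub s (lift 0 u)) u) = ee k (Sub t u)"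
      using a b sp(1) by (simp add: algebra_simps)
  qed
  then show ?case using m by simp
next
  case (j_subL t t' u)
  have e: "ee 0 t' \<le> ee 0 t" using j_subL by simp
  then have mm: "max (ee 0 t') 1 \<le> max (ee 0 t) 1" by simp
  have "MS (Sub t' u) < MS (Sub t u)"
    using j_subL e img_le[OF mm] by (simp add: add_mset_le_less)
  moreover have "\<forall>k. ee k (Sub t' u) \<le> ee k (Sub t u)"
    using j_subL mm by (simp add: add_mono mult_le_mono)
  ultimately show ?case by simp
next
  case (j_subR u u' t)
  have "MS (Sub t u') < MS (Sub t u)"
    using j_subR img_less[of "max (ee 0 t) 1"] by (simp add: add_mset_le_le_less)
  moreover have "\<forall>k. ee k (Sub t u') \<le> ee k (Sub t u)"
    using j_subR by simp
  ultimately show ?case by simp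
next
  case (j_appL t t' u)
  then show ?case by (simp add: add_mono union_le_mono1)
next
  case (j_appR u u' t)
  then show ?case by (simp add: add_mono union_le_mono2)
qed simp

theorem corollary28:
  shows "\<not> (\<exists>f :: nat \<Rightarrow> trm. \<forall>i. jobox (f i) (f (Suc i)))"
proof
  assume "\<exists>f :: nat \<Rightarrow> trm. \<forall>i. jobox (f i) (f (Suc i))"
  then obtain f :: "nat \<Rightarrow> trm" where f: "\<forall>i. jobox (f i) (f (Suc i))" by blast
  have "\<forall>i. (MS (f (Suc i)), MS (f i)) \<in> {(M :: nat multiset, N). M < N}"
  proof
    fix i
    obtain t' u' where h: "obox_eq (f i) t'" "jstep t' u'" "obox_eq u' (f (Suc i))"
      using f unfolding jobox_def by blast
    have "MS (f i) = MS t'" using obox_inv[OF h(1)] by simp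
    moreover have "MS u' < MS t'" using jstep_dec[OF h(2)] by simp
    moreover have "MS u' = MS (f (Suc i))" using obox_inv[OF h(3)] by simp
    ultimately show "(MS (f (Suc i)), MS (f i)) \<in> {(M :: nat multiset, N). M < N}" by simp
  qed
  then have "\<exists>g. \<forall>i. (g (Suc i), g i) \<in> {(M :: nat multiset, N). M < N}"
    by (intro exI[of _ "\<lambda>i. MS (f i)"]) simp
  then show False using wf_less_multiset[where 'a=nat] unfolding wf_iff_no_infinite_down_chain
    by blast
qed

end
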